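(* Let $A$ be a first countable locally convex topological vector space over $\mathbb C$ and give $A^\vee$ the topology of uniform convergence on compact sets. Then on $\mathrm{Max}\,A$ the lower Vietoris topology is finer than the topology generated by the sets $\{V\in\mathrm{Max}\,A: F(V)\cap K'=\emptyset\}$ with $K'\subset A^\vee$ compact.
   Context: $\mathrm{Max}\,A$ is the set of closed subspaces of $A$; its lower Vietoris topology is generated by $\{V:V\cap U\ne\emptyset\}$, $U\subset A$ open. $A^\vee$ is the continuous dual with subbasis $\{\phi:\phi(K)\subset U\}$, $K\subset A$ compact, $U\subset\mathbb C$ open; $F(V)=\{\phi\in A^\vee:\phi|_V=0\}$. *)

theory Defs
  imports "HOL-Analysis.Analysis"
begin

definition gen_top_on :: "'b set \<Rightarrow> 'b set set \<Rightarrow> 'b topology" where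
  "gen_top_on X S = topology_generated_by (insert X ((\<lambda>s. X \<inter> s) ` S))"

definition complex_tvs :: "(complex \<Rightarrow> 'a::{ab_group_add,topological_space} \<Rightarrow> 'a) \<Rightarrow> bool" where
  "complex_tvs sc \<longleftrightarrow> vector_space sc
     \<and> continuous_on UNIV (\<lambda>p::'a \<times> 'a. fst p + snd p)
     \<and> continuous_on UNIV (\<lambda>p::complex \<times> 'a. sc (fst p) (snd p))"

definition convex_sc :: "(complex \<Rightarrow> 'a::ab_group_add \<Rightarrow> 'a) \<Rightarrow> 'a set \<Rightarrow> bool" where
  "convex_sc sc C \<longleftrightarrow> (\<forall>x\<in>C. \<forall>y\<in>C. \<forall>t::real. 0 \<le> t \<and> t \<le> 1 \<longrightarrow>
      sc (complex_of_real t) x + sc (complex_of_real (1 - t)) y \<in> C)"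

definition locally_convex :: "(complex \<Rightarrow> 'a::{ab_group_add,topological_space} \<Rightarrow> 'a) \<Rightarrow> bool" where
  "locally_convex sc \<longleftrightarrow> complex_tvs sc \<and>
     (\<forall>W. open W \<and> 0 \<in> W \<longrightarrow> (\<exists>C. open C \<and> 0 \<in> C \<and> C \<subseteq> W \<and> convex_sc sc C))"

definition cdual :: "(complex \<Rightarrow> 'a::{ab_group_add,topological_space} \<Rightarrow> 'a) \<Rightarrow> ('a \<Rightarrow> complex) set" where
  "cdual sc = {\<phi>. Vector_Spaces.linear sc (*) \<phi> \<and> continuous_on UNIV \<phi>}"

text \<open>Compact-open topology (uniform convergence on compacta) on the dual.\<close>
definition dual_top :: "(complex \<Rightarrow> 'a::{ab_group_add,topological_space} \<Rightarrow> 'a) \<Rightarrow> ('a \<Rightarrow> complex) topology" where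
  "dual_top sc = gen_top_on (cdual sc)
     {{\<phi>. \<phi> ` K \<subseteq> U} | K U. compact K \<and> open (U::complex set)}"

definition MaxA :: "(complex \<Rightarrow> 'a::{ab_group_add,topological_space} \<Rightarrow> 'a) \<Rightarrow> 'a set set" where
  "MaxA sc = {V. closed V \<and> module.subspace sc V}"

definition lower_vietoris :: "(complex \<Rightarrow> 'a::{ab_group_add,topological_space} \<Rightarrow> 'a) \<Rightarrow> 'a set topology" where
  "lower_vietoris sc = gen_top_on (MaxA sc) {{V. V \<inter> U \<noteq> {}} | U. open U}"

definition annih :: "(complex \<Rightarrow> 'a::{ab_group_add,topological_space} \<Rightarrow> 'a) \<Rightarrow> 'a set \<Rightarrow> ('a \<Rightarrow> complex) set" where
  "annih sc V = {\<phi> \<in> cdual sc. \<forall>v\<in>V. \<phi> v = 0}"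

definition annih_top :: "(complex \<Rightarrow> 'a::{ab_group_add,topological_space} \<Rightarrow> 'a) \<Rightarrow> 'a set topology" where
  "annih_top sc = gen_top_on (MaxA sc)
     {{V. annih sc V \<inter> K' = {}} | K'. compactin (dual_top sc) K'}"

end

theory Submission
  imports Defs
begin

lemma gen_top_sub:
  assumes "openin T X" "\<forall>s\<in>S. openin T (X \<inter> s)" "openin (gen_top_on X S) U"
  shows "openin T U"
proof -
  have "generate_topology_on (insert X ((\<lambda>s. X \<inter> s) ` S)) U"
    using assms(3) unfolding gen_top_on_def openin_topology_generated_by_iff .
  then show ?thesis
  proof (induct rule: generate_topology_on.induct)
    case Empty then show ?case by simp
  next
    case (Int a b) then show ?case by (simp add: openin_Int)
  next
    case (UN K) then show ?case by (simp add: openin_Union)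
  next
    case (Basis s) then show ?case using assms(1,2) by auto
  qed
qed

lemma gen_top_open1: "s \<in> S \<Longrightarrow> openin (gen_top_on X S) (X \<inter> s)"
  unfolding gen_top_on_def by (rule topology_generated_by_Basis) auto

lemma gen_top_open2: "openin (gen_top_on X S) X"
  unfolding gen_top_on_def by (rule topology_generated_by_Basis) auto

lemma gen_top_topspace: "topspace (gen_top_on X S) = X"
  unfolding gen_top_on_def by auto

lemma key:
  fixes sc :: "complex \<Rightarrow> 'a::{ab_group_add,first_countable_topology} \<Rightarrow> 'a"
  assumes K': "compactin (dual_top sc) K'"
  shows "openin (lower_vietoris sc) (MaxA sc \<inter> {V. annih sc V \<inter> K' = {}})"
proof (subst openin_subopen, intro ballI)
  fix V0 assume V0: "V0 \<in> MaxA sc \<inter> {V. annih sc V \<inter> K' = {}}"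
  have Kc: "K' \<subseteq> cdual sc"
    using compactin_subset_topspace[OF K'] unfolding dual_top_def gen_top_topspace .
  have nz: "\<exists>v\<in>V0. \<phi> v \<noteq> 0" if "\<phi> \<in> K'" for \<phi>
    using V0 that Kc unfolding annih_def by auto
  define g where "g v = cdual sc \<inter> {\<psi>. \<psi> ` {v} \<subseteq> -{0}}" for v
  have gop: "openin (dual_top sc) (g v)" for v
    unfolding g_def dual_top_def
    by (rule gen_top_open1) (auto intro!: exI[of _ "{v}"] exI[of _ "-{0::complex}"])
  have "K' \<subseteq> \<Union>(g ` V0)"
    using nz Kc unfolding g_def by fastforce
  moreover have "\<forall>B\<in>g ` V0. openin (dual_top sc) B" using gop by blast
  ultimately obtain F where F: "finite F" "F \<subseteq> g ` V0" "K' \<subseteq> \<Union>F"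
    using K' unfolding compactin_def by meson
  then obtain P where P: "P \<subseteq> V0" "finite P" "F = g ` P"
    by (meson finite_subset_image)
  have Pnz: "\<exists>p\<in>P. \<phi> p \<noteq> 0" if "\<phi> \<in> K'" for \<phi>
    using F(3) P(3) that unfolding g_def by auto
  have "\<forall>p. \<exists>B::nat \<Rightarrow> 'a set. (\<forall>i. open (B i)) \<and> (\<forall>i. p \<in> B i) \<and>
      (\<forall>S. open S \<and> p \<in> S \<longrightarrow> eventually (\<lambda>i. B i \<subseteq> S) sequentially)"
    by (metis countable_basis_at_decseq)
  from choice[OF this] obtain B :: "'a \<Rightarrow> nat \<Rightarrow> 'a set" where B0:
    "\<forall>p. (\<forall>i. open (B p i)) \<and> (\<forall>i. p \<in> B p i) \<and>
      (\<forall>S. open S \<and> p \<in> S \<longrightarrow> eventually (\<lambda>i. B p i \<subseteq> S) sequentially)"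
    by (elim exE) (rule that)
  have B: "\<And>p i. open (B p i)" "\<And>p i. p \<in> B p i"
       "\<And>p S. open S \<Longrightarrow> p \<in> S \<Longrightarrow> eventually (\<lambda>i. B p i \<subseteq> S) sequentially"
    using B0 by auto
  have claim: "\<exists>n. \<forall>V. (\<forall>p\<in>P. V \<inter> B p n \<noteq> {}) \<longrightarrow> annih sc V \<inter> K' = {}"
  proof (rule ccontr)
    assume neg: "\<not> ?thesis"
    have ex: "\<forall>n. \<exists>\<phi>. \<phi> \<in> K' \<and> (\<forall>p\<in>P. \<exists>w\<in>B p n. \<phi> w = 0)"
    proof
      fix n
      from neg obtain V where V: "\<forall>p\<in>P. V \<inter> B p n \<noteq> {}" "annih sc V \<inter> K' \<noteq> {}"
        by blast
      then obtain \<phi> where \<phi>: "\<phi> \<in> K'" "\<forall>v\<in>V. \<phi> v = 0"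
        unfolding annih_def by blast
      have "\<forall>p\<in>P. \<exists>w\<in>B p n. \<phi> w = 0"
      proof
        fix p assume "p \<in> P"
        with V(1) obtain x where "x \<in> V" "x \<in> B p n" by blast
        with \<phi>(2) show "\<exists>w\<in>B p n. \<phi> w = 0" by blast
      qed
      with \<phi>(1) show "\<exists>\<phi>. \<phi> \<in> K' \<and> (\<forall>p\<in>P. \<exists>w\<in>B p n. \<phi> w = 0)" by blast
    qed
    define phs where "phs n = (SOME \<phi>. \<phi> \<in> K' \<and> (\<forall>p\<in>P. \<exists>w\<in>B p n. \<phi> w = 0))" for n
    have phs0: "phs n \<in> K' \<and> (\<forall>p\<in>P. \<exists>w\<in>B p n. phs n w = 0)" for n
      unfolding phs_def by (rule someI_ex[OF ex[rule_format]])
    have phs: "\<And>n. phs n \<in> K'" "\<And>n p. p \<in> P \<Longrightarrow> \<exists>w\<in>B p n. phs n w = 0"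
      using phs0 by auto
    define w where "w p n = (SOME x. x \<in> B p n \<and> phs n x = 0)" for p n
    have w: "w p n \<in> B p n \<and> phs n (w p n) = 0" if "p \<in> P" for p n
      unfolding w_def by (rule someI_ex[OF phs(2)[OF that, of n, unfolded Bex_def]])
    have wlim: "w p \<longlonglongrightarrow> p" if "p \<in> P" for p
    proof (rule topological_tendstoI)
      fix S assume "open S" "p \<in> S"
      from B(3)[OF this] show "eventually (\<lambda>n. w p n \<in> S) sequentially"
        by (rule eventually_mono) (use w that in blast)
    qed
    have "\<forall>\<phi>\<in>K'. \<exists>N G. openin (dual_top sc) G \<and> \<phi> \<in> G \<and> (\<forall>m\<ge>N. phs m \<notin> G)"
    proof
      fix \<phi> assume "\<phi> \<in> K'"
      then obtain p where p: "p \<in> P" "\<phi> p \<noteq> 0" using Pnz by blast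
      have cont: "continuous_on UNIV \<phi>" using Kc \<open>\<phi> \<in> K'\<close> unfolding cdual_def by auto
      have "open (\<phi> -` (-{0}))"
        by (rule open_vimage[OF _ cont]) auto
      then have "eventually (\<lambda>n. w p n \<in> \<phi> -` (-{0})) sequentially"
        using topological_tendstoD[OF wlim[OF p(1)] \<open>open (\<phi> -` (-{0}))\<close>] p(2) by simp
      then obtain N where N: "\<And>m. m \<ge> N \<Longrightarrow> \<phi> (w p m) \<noteq> 0"
        unfolding eventually_sequentially by auto
      define Kc where "Kc = insert p (range (\<lambda>m. w p (m + N)))"
      have "(\<lambda>m. w p (m + N)) \<longlonglongrightarrow> p"
        using LIMSEQ_ignore_initial_segment[OF wlim[OF p(1)]] by simp
      then have "compactin euclidean Kc"
        unfolding Kc_def by (intro compactin_sequence_with_limit) auto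
      then have cK: "compact Kc" by simp
      define G where "G = cdual sc \<inter> {\<psi>. \<psi> ` Kc \<subseteq> -{0}}"
      have "openin (dual_top sc) G"
        unfolding G_def dual_top_def
        by (rule gen_top_open1) (use cK in \<open>auto intro!: exI[of _ Kc] exI[of _ "-{0::complex}"]\<close>)
      moreover have "\<phi> \<in> G"
        unfolding G_def Kc_def using Kc \<open>\<phi> \<in> K'\<close> p N by auto
      moreover have "phs m \<notin> G" if "m \<ge> N" for m
      proof -
        have "w p m \<in> Kc" unfolding Kc_def using that
          by (metis le_add_diff_inverse2 rangeI insertI2)
        moreover have "phs m (w p m) = 0" using w[OF p(1), of m] by simp
        ultimately have "0 \<in> phs m ` Kc" by (metis imageI)
        then show ?thesis unfolding G_def by blast
      qed
      ultimately show "\<exists>N G. openin (dual_top sc) G \<and> \<phi> \<in> G \<and> (\<forall>m\<ge>N. phs m \<notin> G)"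
        by blast
    qed
    then have "\<forall>\<phi>\<in>K'. \<exists>NG. openin (dual_top sc) (snd NG) \<and> \<phi> \<in> snd NG \<and> (\<forall>m\<ge>fst NG. phs m \<notin> snd NG)"
      by auto
    from bchoice[OF this] obtain NGf where NGf: "\<forall>\<phi>\<in>K'. openin (dual_top sc) (snd (NGf \<phi>)) \<and> \<phi> \<in> snd (NGf \<phi>) \<and> (\<forall>m\<ge>fst (NGf \<phi>). phs m \<notin> snd (NGf \<phi>))"
      by (elim exE) (rule that)
    define NN where "NN \<phi> = fst (NGf \<phi>)" for \<phi>
    define GG where "GG \<phi> = snd (NGf \<phi>)" for \<phi>
    have NG: "\<And>\<phi>. \<phi> \<in> K' \<Longrightarrow> openin (dual_top sc) (GG \<phi>) \<and> \<phi> \<in> GG \<phi> \<and> (\<forall>m\<ge>NN \<phi>. phs m \<notin> GG \<phi>)"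
      using NGf unfolding NN_def GG_def by blast
    have "K' \<subseteq> \<Union>(GG ` K')" using NG by blast
    moreover have "\<forall>B\<in>GG ` K'. openin (dual_top sc) B" using NG by blast
    ultimately obtain F2 where F2: "finite F2" "F2 \<subseteq> GG ` K'" "K' \<subseteq> \<Union>F2"
      using K' unfolding compactin_def by meson
    then obtain C where C: "C \<subseteq> K'" "finite C" "F2 = GG ` C"
      by (meson finite_subset_image)
    define M where "M = sum NN C"
    from F2(3) C(3) phs(1)[of M] obtain \<phi> where "\<phi> \<in> C" "phs M \<in> GG \<phi>" by auto
    moreover have "NN \<phi> \<le> M" unfolding M_def using C(2) \<open>\<phi> \<in> C\<close> by (simp add: member_le_sum)
    ultimately show False using NG C(1) by blast
  qed
  then obtain n where n: "\<And>V. (\<forall>p\<in>P. V \<inter> B p n \<noteq> {}) \<Longrightarrow> annih sc V \<inter> K' = {}" by blast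
  define T where "T = MaxA sc \<inter> \<Inter>((\<lambda>p. MaxA sc \<inter> {V. V \<inter> B p n \<noteq> {}}) ` P)"
  have "openin (lower_vietoris sc) (MaxA sc \<inter> \<Inter>((\<lambda>p. MaxA sc \<inter> {V. V \<inter> B p n \<noteq> {}}) ` Q))"
    if "finite Q" for Q
    using that
  proof (induct Q rule: finite_induct)
    case empty then show ?case unfolding lower_vietoris_def by (simp add: gen_top_open2)
  next
    case (insert x Q)
    have "openin (lower_vietoris sc) (MaxA sc \<inter> {V. V \<inter> B x n \<noteq> {}})"
      unfolding lower_vietoris_def by (rule gen_top_open1) (use B(1) in blast)
    then have "openin (lower_vietoris sc) ((MaxA sc \<inter> {V. V \<inter> B x n \<noteq> {}}) \<inter>
        (MaxA sc \<inter> \<Inter>((\<lambda>p. MaxA sc \<inter> {V. V \<inter> B p n \<noteq> {}}) ` Q)))"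
      using insert(3) by (rule openin_Int)
    then show ?case by (simp add: Int_assoc Int_left_commute)
  qed
  then have "openin (lower_vietoris sc) T" unfolding T_def using P(2) by blast
  moreover have "V0 \<in> T" unfolding T_def using V0 P(1) B(2) by blast
  moreover have "T \<subseteq> MaxA sc \<inter> {V. annih sc V \<inter> K' = {}}"
    unfolding T_def using n by blast
  ultimately show "\<exists>T. openin (lower_vietoris sc) T \<and> V0 \<in> T \<and> T \<subseteq> MaxA sc \<inter> {V. annih sc V \<inter> K' = {}}"
    by blast
qed

theorem lemma7p10:
  fixes sc :: "complex \<Rightarrow> 'a::{ab_group_add,first_countable_topology} \<Rightarrow> 'a"
  assumes "locally_convex sc"
  shows "\<forall>S. openin (annih_top sc) S \<longrightarrow> openin (lower_vietoris sc) S"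
proof (intro allI impI)
  fix S assume S: "openin (annih_top sc) S"
  show "openin (lower_vietoris sc) S"
  proof (rule gen_top_sub[of _ "MaxA sc" "{{V. annih sc V \<inter> K' = {}} | K'. compactin (dual_top sc) K'}"])
    show "openin (lower_vietoris sc) (MaxA sc)"
      unfolding lower_vietoris_def by (rule gen_top_open2)
    show "\<forall>s\<in>{{V. annih sc V \<inter> K' = {}} | K'. compactin (dual_top sc) K'}. openin (lower_vietoris sc) (MaxA sc \<inter> s)"
      using key by blast
    show "openin (gen_top_on (MaxA sc) {{V. annih sc V \<inter> K' = {}} | K'. compactin (dual_top sc) K'}) S"
      using S unfolding annih_top_def .
  qed
qed

end
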